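(* Let $(G,R,\omega)$ be a metric RPP instance and $S$ an edge-minimizing Eulerian extension for it. Then every vertex $v\in V$ is incident to at most two edges of $S$ (counted with multiplicity).
   Context: An RPP instance is a triple $(G,R,\omega)$, where $G=(V,E)$ is an undirected multigraph, $\omega\colon E\to\mathbb{N}$ assigns weights (parallel edges have equal weight), and $R$ is a nonempty multiset of edges of $G$. The instance is metric if $G$ contains an edge between any two vertices and the weights satisfy the triangle inequality $\omega(\{u,w\})\le\omega(\{u,v\})+\omega(\{v,w\})$ for all $u,v,w\in V$. For a multiset $X$ of edges: - $\omega(X)$ and $|X|$ are the weight and cardinality counted with multiplicity; - $V(X)$ is the set of vertices incident to edges of $X$; - $G\langle X\rangle=(V(X),X)$ is the multigraph formed by $X$ (no isolated vertices); - $\uplus$ denotes multiset sum. A vertex is balanced in a multigraph if its degree is even (a loop counts 2), and imbalanced otherwise. A multigraph without isolated vertices is Eulerian if it is connected and all vertices are balanced. An Eulerian extension for $(G,R,\omega)$ is a multiset $S$ of edges of $G$ such that $G\langle R\uplus S\rangle$ is Eulerian. It is edge-minimizing if there is no Eulerian extension $S'$ with $|S'|<|S|$ and $\omega(S')\le\omega(S)$. *)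

theory Defs
  imports Main "HOL-Library.Multiset"
begin

text \<open>An undirected multigraph G = (V,E): edges are elements of an abstract type,
  each edge e has a nonempty set of one or two endpoints ends e (one endpoint = loop).\<close>

definition multigraph :: "'v set \<Rightarrow> 'e set \<Rightarrow> ('e \<Rightarrow> 'v set) \<Rightarrow> bool" where
  "multigraph V E ends \<longleftrightarrow> finite V \<and> finite E \<and>
     (\<forall>e\<in>E. ends e \<subseteq> V \<and> ends e \<noteq> {} \<and> card (ends e) \<le> 2)"

definition mweight :: "('e \<Rightarrow> nat) \<Rightarrow> 'e multiset \<Rightarrow> nat" where
  "mweight w X = sum_mset (image_mset w X)"

definition mverts :: "('e \<Rightarrow> 'v set) \<Rightarrow> 'e multiset \<Rightarrow> 'v set" where
  "mverts ends X = (\<Union>e\<in>set_mset X. ends e)"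

definition mdeg :: "('e \<Rightarrow> 'v set) \<Rightarrow> 'e multiset \<Rightarrow> 'v \<Rightarrow> nat" where
  "mdeg ends X v = sum_mset (image_mset (\<lambda>e. if ends e = {v} then 2 else if v \<in> ends e then 1 else 0) X)"

definition madj :: "('e \<Rightarrow> 'v set) \<Rightarrow> 'e multiset \<Rightarrow> ('v \<times> 'v) set" where
  "madj ends X = {(u, w). \<exists>e\<in>set_mset X. u \<in> ends e \<and> w \<in> ends e}"

definition mconnected :: "('e \<Rightarrow> 'v set) \<Rightarrow> 'e multiset \<Rightarrow> bool" where
  "mconnected ends X \<longleftrightarrow> mverts ends X \<noteq> {} \<and>
     (\<forall>u\<in>mverts ends X. \<forall>w\<in>mverts ends X. (u, w) \<in> (madj ends X)\<^sup>*)"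

definition eulerian :: "('e \<Rightarrow> 'v set) \<Rightarrow> 'e multiset \<Rightarrow> bool" where
  "eulerian ends X \<longleftrightarrow> mconnected ends X \<and> (\<forall>v\<in>mverts ends X. even (mdeg ends X v))"

definition rpp_instance :: "'v set \<Rightarrow> 'e set \<Rightarrow> ('e \<Rightarrow> 'v set) \<Rightarrow> 'e multiset \<Rightarrow> ('e \<Rightarrow> nat) \<Rightarrow> bool" where
  "rpp_instance V E ends R w \<longleftrightarrow> multigraph V E ends \<and> R \<noteq> {#} \<and> set_mset R \<subseteq> E \<and>
     (\<forall>e\<in>E. \<forall>e'\<in>E. ends e = ends e' \<longrightarrow> w e = w e')"

text \<open>Metric: an edge between any two distinct vertices, and the triangle inequality
  omega({u,w}) \<le> omega({u,v}) + omega({v,w}) for all u,v,w (whenever those edges exist;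
  since parallel edges have equal weight, omega on vertex pairs is well defined).\<close>
definition metric_instance :: "'v set \<Rightarrow> 'e set \<Rightarrow> ('e \<Rightarrow> 'v set) \<Rightarrow> 'e multiset \<Rightarrow> ('e \<Rightarrow> nat) \<Rightarrow> bool" where
  "metric_instance V E ends R w \<longleftrightarrow> rpp_instance V E ends R w \<and>
     (\<forall>u\<in>V. \<forall>v\<in>V. u \<noteq> v \<longrightarrow> (\<exists>e\<in>E. ends e = {u, v})) \<and>
     (\<forall>u\<in>V. \<forall>v\<in>V. \<forall>x\<in>V. \<forall>e1\<in>E. \<forall>e2\<in>E. \<forall>e3\<in>E.
        ends e1 = {u, x} \<longrightarrow> ends e2 = {u, v} \<longrightarrow> ends e3 = {v, x} \<longrightarrow> w e1 \<le> w e2 + w e3)"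

definition eulerian_extension :: "'e set \<Rightarrow> ('e \<Rightarrow> 'v set) \<Rightarrow> 'e multiset \<Rightarrow> 'e multiset \<Rightarrow> bool" where
  "eulerian_extension E ends R S \<longleftrightarrow> set_mset S \<subseteq> E \<and> eulerian ends (R + S)"

definition edge_minimizing :: "'e set \<Rightarrow> ('e \<Rightarrow> 'v set) \<Rightarrow> 'e multiset \<Rightarrow> ('e \<Rightarrow> nat) \<Rightarrow> 'e multiset \<Rightarrow> bool" where
  "edge_minimizing E ends R w S \<longleftrightarrow> eulerian_extension E ends R S \<and>
     \<not> (\<exists>S'. eulerian_extension E ends R S' \<and> size S' < size S \<and> mweight w S' \<le> mweight w S)"

end

theory Submission
  imports Defs
begin

definition dd :: "('e \<Rightarrow> 'v set) \<Rightarrow> 'e \<Rightarrow> 'v \<Rightarrow> nat" where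
  "dd ends e u = (if ends e = {u} then 2 else if u \<in> ends e then 1 else 0)"

lemma mdeg_add: "mdeg ends (add_mset e X) u = dd ends e u + mdeg ends X u"
  unfolding mdeg_def dd_def by simp

lemma mdeg_plus: "mdeg ends (A + B) u = mdeg ends A u + mdeg ends B u"
  unfolding mdeg_def by simp

lemma madj_add: "madj ends (add_mset e X) = ends e \<times> ends e \<union> madj ends X"
  unfolding madj_def by auto

lemma madj_plus: "madj ends (A + B) = madj ends A \<union> madj ends B"
  unfolding madj_def by auto

lemma mverts_add: "mverts ends (add_mset e X) = ends e \<union> mverts ends X"
  unfolding mverts_def by auto

lemma mverts_plus: "mverts ends (A + B) = mverts ends A \<union> mverts ends B"
  unfolding mverts_def by auto

lemma mdeg_out: "u \<notin> mverts ends X \<Longrightarrow> mdeg ends X u = 0"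
  by (induction X) (auto simp: mdeg_add mverts_add dd_def, simp add: mdeg_def)

lemma dd_form: "ends e = {a, b} \<Longrightarrow> dd ends e u = (if u = a then 1 else 0) + (if u = b then 1 else 0)"
  unfolding dd_def by auto

lemma madj_sym: "(p, q) \<in> madj ends X \<Longrightarrow> (q, p) \<in> madj ends X"
  unfolding madj_def by auto

lemma madj_rtrancl_sym: "(p, q) \<in> (madj ends X)\<^sup>* \<Longrightarrow> (q, p) \<in> (madj ends X)\<^sup>*"
proof -
  have "sym (madj ends X)" by (auto simp: sym_def intro: madj_sym)
  then have "sym ((madj ends X)\<^sup>*)" by (rule sym_rtrancl)
  then show "(p, q) \<in> (madj ends X)\<^sup>* \<Longrightarrow> (q, p) \<in> (madj ends X)\<^sup>*" by (auto simp: sym_def)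
qed

lemma madj_range: "(p, q) \<in> (madj ends X)\<^sup>* \<Longrightarrow> p = q \<or> q \<in> mverts ends X"
  by (induction rule: rtrancl_induct) (auto simp: madj_def mverts_def)

lemma conn_transfer:
  assumes "mconnected ends T" "mverts ends T' \<noteq> {}" "mverts ends T' \<subseteq> mverts ends T"
    "b \<in> mverts ends T"
    "\<And>p q. (p, q) \<in> madj ends T \<Longrightarrow> (p, q) \<in> madj ends T' \<or> (p \<in> K \<and> q \<in> K)"
    "\<And>k. k \<in> K \<Longrightarrow> (b, k) \<in> (madj ends T')\<^sup>*"
  shows "mconnected ends T'"
proof -
  have key: "(b, u) \<in> (madj ends T')\<^sup>*" if "(b, u) \<in> (madj ends T)\<^sup>*" for u
    using that
  proof (induction rule: rtrancl_induct)
    case base then show ?case by simp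
  next
    case (step p q)
    from assms(5)[OF step(2)] show ?case
    proof
      assume "(p, q) \<in> madj ends T'" then show ?thesis using step(3) by simp
    next
      assume "p \<in> K \<and> q \<in> K" then show ?thesis using assms(6) by simp
    qed
  qed
  show ?thesis unfolding mconnected_def
  proof (intro conjI ballI)
    show "mverts ends T' \<noteq> {}" by fact
    fix u w assume u: "u \<in> mverts ends T'" and w: "w \<in> mverts ends T'"
    have "(b, u) \<in> (madj ends T')\<^sup>*" using key assms(1,3,4) u unfolding mconnected_def by blast
    then have "(u, b) \<in> (madj ends T')\<^sup>*" by (rule madj_rtrancl_sym)
    moreover have "(b, w) \<in> (madj ends T')\<^sup>*" using key assms(1,3,4) w unfolding mconnected_def by blast
    ultimately show "(u, w) \<in> (madj ends T')\<^sup>*" by simp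
  qed
qed

definition wf_edges :: "('e \<Rightarrow> 'v set) \<Rightarrow> 'e multiset \<Rightarrow> bool" where
  "wf_edges ends X \<longleftrightarrow> (\<forall>e\<in>#X. \<exists>a b. ends e = {a, b})"

lemma finite_mverts: "wf_edges ends X \<Longrightarrow> finite (mverts ends X)"
  unfolding wf_edges_def mverts_def by (auto intro!: finite_UN_I)

lemma sum_dd: "ends e = {a, b} \<Longrightarrow> finite C \<Longrightarrow>
   (\<Sum>u\<in>C. dd ends e u) = (if a \<in> C then 1 else 0) + (if b \<in> C then 1 else 0)"
  by (simp add: dd_form sum.distrib)

lemma parity_closed:
  assumes "finite C" "wf_edges ends X" "\<forall>e\<in>#X. ends e \<subseteq> C \<or> ends e \<inter> C = {}"
  shows "even (\<Sum>u\<in>C. mdeg ends X u)"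
  using assms(2,3)
proof (induction X)
  case empty then show ?case by (simp add: mdeg_def)
next
  case (add e X)
  obtain a b where ab: "ends e = {a, b}" using add.prems unfolding wf_edges_def by auto
  have cl: "a \<in> C \<longleftrightarrow> b \<in> C" using add.prems(2) ab by auto
  have "even (\<Sum>u\<in>C. dd ends e u)" using sum_dd[of ends e a b C, OF ab assms(1)] cl by auto
  moreover have "even (\<Sum>u\<in>C. mdeg ends X u)" using add by (auto simp: wf_edges_def)
  ultimately show ?case by (simp add: mdeg_add sum.distrib)
qed

lemma three_parity:
  assumes T: "T = add_mset e1 (add_mset e2 (add_mset e3 T0))"
   and h1: "ends e1 = {v, x1}" and h2: "ends e2 = {v, x2}" and h3: "ends e3 = {v, x3}"
   and wf: "wf_edges ends T"
   and ev: "\<forall>u\<in>mverts ends T. even (mdeg ends T u)"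
   and nv: "(y, v) \<notin> (madj ends T0)\<^sup>*"
  shows "even ((if (y, x1) \<in> (madj ends T0)\<^sup>* then 1 else 0)
             + (if (y, x2) \<in> (madj ends T0)\<^sup>* then 1 else 0)
             + (if (y, x3) \<in> (madj ends T0)\<^sup>* then 1 else 0) :: nat)"
proof -
  define C where "C = {u. (y, u) \<in> (madj ends T0)\<^sup>*}"
  have wf0: "wf_edges ends T0" using wf T by (auto simp: wf_edges_def)
  have "C \<subseteq> insert y (mverts ends T0)" using madj_range unfolding C_def by fastforce
  then have fin: "finite C" using finite_mverts[OF wf0] finite_subset by blast
  have cl: "\<forall>e\<in>#T0. ends e \<subseteq> C \<or> ends e \<inter> C = {}"
  proof
    fix e assume e: "e \<in># T0"
    show "ends e \<subseteq> C \<or> ends e \<inter> C = {}"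
    proof (cases "ends e \<inter> C = {}")
      case False
      then obtain p where p: "p \<in> ends e" "p \<in> C" by auto
      have "q \<in> C" if "q \<in> ends e" for q
      proof -
        have "(p, q) \<in> madj ends T0" using e p that unfolding madj_def by auto
        then show ?thesis using p(2) unfolding C_def by auto
      qed
      then show ?thesis by auto
    qed simp
  qed
  have A: "even (\<Sum>u\<in>C. mdeg ends T0 u)" by (rule parity_closed[OF fin wf0 cl])
  have B: "even (\<Sum>u\<in>C. mdeg ends T u)"
  proof (rule dvd_sum)
    fix u assume "u \<in> C"
    show "even (mdeg ends T u)"
      using ev mdeg_out[of u ends T] by (cases "u \<in> mverts ends T") auto
  qed
  have eq: "(\<Sum>u\<in>C. mdeg ends T u) = (\<Sum>u\<in>C. dd ends e1 u) + (\<Sum>u\<in>C. dd ends e2 u)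
      + (\<Sum>u\<in>C. dd ends e3 u) + (\<Sum>u\<in>C. mdeg ends T0 u)"
    by (simp add: T mdeg_add sum.distrib)
  have vC: "v \<notin> C" using nv unfolding C_def by auto
  have s1: "(\<Sum>u\<in>C. dd ends e1 u) = (if x1 \<in> C then 1 else 0)"
    using sum_dd[of ends e1 v x1 C, OF h1 fin] vC by simp
  have s2: "(\<Sum>u\<in>C. dd ends e2 u) = (if x2 \<in> C then 1 else 0)"
    using sum_dd[of ends e2 v x2 C, OF h2 fin] vC by simp
  have s3: "(\<Sum>u\<in>C. dd ends e3 u) = (if x3 \<in> C then 1 else 0)"
    using sum_dd[of ends e3 v x3 C, OF h3 fin] vC by simp
  from A B eq s1 s2 s3 show ?thesis unfolding C_def by auto
qed

lemma reduce:
  assumes met: "metric_instance V E ends R \<omega>"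
   and ext: "eulerian_extension E ends R S"
   and S: "S = add_mset e1 (add_mset e2 (add_mset e3 S0))"
   and h1: "ends e1 = {v, x1}" and h2: "ends e2 = {v, x2}" and h3: "ends e3 = {v, x3}"
   and reach: "(x1, v) \<in> (madj ends (R + S0))\<^sup>*"
  shows "\<exists>S'. eulerian_extension E ends R S' \<and> size S' < size S \<and> mweight \<omega> S' \<le> mweight \<omega> S"
proof -
  define T0 where "T0 = R + S0"
  have T: "R + S = add_mset e1 (add_mset e2 (add_mset e3 T0))" by (simp add: S T0_def)
  have SE: "set_mset S \<subseteq> E" and eul: "eulerian ends (R + S)"
    using ext unfolding eulerian_extension_def by auto
  have mg: "multigraph V E ends" using met unfolding metric_instance_def rpp_instance_def by auto
  have edge: "\<forall>u\<in>V. \<forall>v\<in>V. u \<noteq> v \<longrightarrow> (\<exists>e\<in>E. ends e = {u, v})"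
    using met[unfolded metric_instance_def] by (rule conjunct2[THEN conjunct1])
  have tri: "\<forall>u\<in>V. \<forall>v\<in>V. \<forall>x\<in>V. \<forall>e1\<in>E. \<forall>e2\<in>E. \<forall>e3\<in>E.
        ends e1 = {u, x} \<longrightarrow> ends e2 = {u, v} \<longrightarrow> ends e3 = {v, x} \<longrightarrow> \<omega> e1 \<le> \<omega> e2 + \<omega> e3"
    using met[unfolded metric_instance_def] by (rule conjunct2[THEN conjunct2])
  have E123: "e1 \<in> E" "e2 \<in> E" "e3 \<in> E" and S0E: "set_mset S0 \<subseteq> E" using SE S by auto
  have V: "v \<in> V" "x1 \<in> V" "x2 \<in> V" using mg E123 h1 h2 unfolding multigraph_def by auto
  have conn: "mconnected ends (R + S)" and evn: "\<forall>u\<in>mverts ends (R + S). even (mdeg ends (R + S) u)"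
    using eul unfolding eulerian_def by auto
  have reach': "(v, x1) \<in> (madj ends T0)\<^sup>*" using madj_rtrancl_sym[OF reach] unfolding T0_def .
  have madjT: "madj ends (R + S) = ends e1 \<times> ends e1 \<union> (ends e2 \<times> ends e2 \<union> (ends e3 \<times> ends e3 \<union> madj ends T0))"
    unfolding T by (simp only: madj_add)
  have mvT: "mverts ends (R + S) = ends e1 \<union> (ends e2 \<union> (ends e3 \<union> mverts ends T0))"
    unfolding T by (simp only: mverts_add)
  show ?thesis
  proof (cases "x1 = x2")
    case True
    define S' where "S' = add_mset e3 S0"
    have T': "R + S' = add_mset e3 T0" by (simp add: S'_def T0_def)
    have sub: "madj ends T0 \<subseteq> madj ends (R + S')" unfolding T' by (auto simp: madj_add)
    have "mconnected ends (R + S')"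
    proof (rule conn_transfer[OF conn, where b = v and K = "{v, x1, x2, x3}"])
      show "mverts ends (R + S') \<noteq> {}" unfolding T' by (auto simp: mverts_add h3)
      show "mverts ends (R + S') \<subseteq> mverts ends (R + S)" unfolding T' mvT by (auto simp: mverts_add)
      show "v \<in> mverts ends (R + S)" unfolding mvT h1 by auto
      fix p q assume "(p, q) \<in> madj ends (R + S)"
      then show "(p, q) \<in> madj ends (R + S') \<or> p \<in> {v, x1, x2, x3} \<and> q \<in> {v, x1, x2, x3}"
        unfolding madjT using sub h1 h2 h3 by auto
    next
      fix k assume k: "k \<in> {v, x1, x2, x3}"
      have a: "(v, x3) \<in> madj ends (R + S')" unfolding T' by (auto simp: madj_add h3)
      have b: "(v, x1) \<in> (madj ends (R + S'))\<^sup>*" using rtrancl_mono[OF sub] reach' by auto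
      show "(v, k) \<in> (madj ends (R + S'))\<^sup>*" using k a b True by auto
    qed
    moreover have "even (mdeg ends (R + S') u)" if "u \<in> mverts ends (R + S')" for u
    proof -
      have "u \<in> mverts ends (R + S)" using that unfolding T' mvT by (auto simp: mverts_add)
      then have "even (mdeg ends (R + S) u)" using evn by auto
      moreover have "mdeg ends (R + S) u = mdeg ends (R + S') u + (if u = v then 2 else 0) + (if u = x1 then 2 else 0)"
        unfolding T T' using True by (simp add: mdeg_add dd_form[of ends e1 v x1, OF h1] dd_form[of ends e2 v x2, OF h2])
      ultimately show ?thesis by (auto split: if_splits)
    qed
    ultimately have "eulerian_extension E ends R S'"
      unfolding eulerian_extension_def eulerian_def S'_def using E123 S0E by auto
    moreover have "size S' < size S" by (simp add: S'_def S)
    moreover have "mweight \<omega> S' \<le> mweight \<omega> S" by (simp add: S'_def S mweight_def)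
    ultimately show ?thesis by blast
  next
    case False
    obtain f where fE: "f \<in> E" and hf: "ends f = {x1, x2}"
      using edge V False by blast
    define S' where "S' = add_mset f (add_mset e3 S0)"
    have T': "R + S' = add_mset f (add_mset e3 T0)" by (simp add: S'_def T0_def)
    have sub: "madj ends T0 \<subseteq> madj ends (R + S')" unfolding T' by (auto simp: madj_add)
    have "mconnected ends (R + S')"
    proof (rule conn_transfer[OF conn, where b = v and K = "{v, x1, x2, x3}"])
      show "mverts ends (R + S') \<noteq> {}" unfolding T' by (auto simp: mverts_add h3)
      show "mverts ends (R + S') \<subseteq> mverts ends (R + S)" unfolding T' mvT by (auto simp: mverts_add hf h1 h2)
      show "v \<in> mverts ends (R + S)" unfolding mvT h1 by auto
      fix p q assume "(p, q) \<in> madj ends (R + S)"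
      then show "(p, q) \<in> madj ends (R + S') \<or> p \<in> {v, x1, x2, x3} \<and> q \<in> {v, x1, x2, x3}"
        unfolding madjT using sub h1 h2 h3 by auto
    next
      fix k assume k: "k \<in> {v, x1, x2, x3}"
      have a: "(v, x3) \<in> madj ends (R + S')" unfolding T' by (auto simp: madj_add h3)
      have c: "(x1, x2) \<in> madj ends (R + S')" unfolding T' by (auto simp: madj_add hf)
      have b: "(v, x1) \<in> (madj ends (R + S'))\<^sup>*" using rtrancl_mono[OF sub] reach' by auto
      have d: "(v, x2) \<in> (madj ends (R + S'))\<^sup>*" using b c by simp
      show "(v, k) \<in> (madj ends (R + S'))\<^sup>*" using k a b d by auto
    qed
    moreover have "even (mdeg ends (R + S') u)" if "u \<in> mverts ends (R + S')" for u
    proof -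
      have "u \<in> mverts ends (R + S)" using that unfolding T' mvT by (auto simp: mverts_add hf h1 h2)
      then have "even (mdeg ends (R + S) u)" using evn by auto
      moreover have "mdeg ends (R + S) u = mdeg ends (R + S') u + (if u = v then 2 else 0)"
        unfolding T T' by (simp add: mdeg_add dd_form[of ends e1 v x1, OF h1] dd_form[of ends e2 v x2, OF h2] dd_form[of ends f x1 x2, OF hf])
      ultimately show ?thesis by (auto split: if_splits)
    qed
    ultimately have "eulerian_extension E ends R S'"
      unfolding eulerian_extension_def eulerian_def S'_def using E123 S0E fE by auto
    moreover have "size S' < size S" by (simp add: S'_def S)
    moreover have "\<omega> f \<le> \<omega> e1 + \<omega> e2"
    proof -
      have "ends e1 = {x1, v}" using h1 by auto
      then show ?thesis using tri[rule_format, of x1 v x2 f e1 e2] V fE E123 hf h2 by blast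
    qed
    then have "mweight \<omega> S' \<le> mweight \<omega> S" by (simp add: S'_def S mweight_def)
    ultimately show ?thesis by blast
  qed
qed

lemma loop_reduce:
  assumes rpp: "rpp_instance V E ends R \<omega>"
   and ext: "eulerian_extension E ends R S"
   and S: "S = add_mset l S0"
   and hl: "ends l = {v}"
  shows "\<exists>S'. eulerian_extension E ends R S' \<and> size S' < size S \<and> mweight \<omega> S' \<le> mweight \<omega> S"
proof -
  define T0 where "T0 = R + S0"
  have T: "R + S = add_mset l T0" by (simp add: S T0_def)
  have SE: "set_mset S \<subseteq> E" and eul: "eulerian ends (R + S)"
    using ext unfolding eulerian_extension_def by auto
  have mg: "multigraph V E ends" and Rne: "R \<noteq> {#}" and RE: "set_mset R \<subseteq> E"
    using rpp unfolding rpp_instance_def by auto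
  have conn: "mconnected ends (R + S)" and evn: "\<forall>u\<in>mverts ends (R + S). even (mdeg ends (R + S) u)"
    using eul unfolding eulerian_def by auto
  have madjT: "madj ends (R + S) = ends l \<times> ends l \<union> madj ends T0"
    unfolding T by (simp only: madj_add)
  have mvT: "mverts ends (R + S) = ends l \<union> mverts ends T0"
    unfolding T by (simp only: mverts_add)
  obtain r where r: "r \<in># R" using Rne by (meson multiset_nonemptyE)
  have "ends r \<noteq> {}" using mg r RE unfolding multigraph_def by auto
  then have ne: "mverts ends T0 \<noteq> {}" using r unfolding T0_def mverts_def by auto
  have "mconnected ends T0"
  proof (rule conn_transfer[OF conn, where b = v and K = "{v}"])
    show "mverts ends T0 \<noteq> {}" by fact
    show "mverts ends T0 \<subseteq> mverts ends (R + S)" unfolding mvT by blast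
    show "v \<in> mverts ends (R + S)" unfolding mvT hl by blast
    fix p q assume "(p, q) \<in> madj ends (R + S)"
    then show "(p, q) \<in> madj ends T0 \<or> p \<in> {v} \<and> q \<in> {v}" unfolding madjT hl by blast
  next
    fix k assume "k \<in> {v}" then show "(v, k) \<in> (madj ends T0)\<^sup>*" by simp
  qed
  moreover have "even (mdeg ends T0 u)" if "u \<in> mverts ends T0" for u
  proof -
    have "u \<in> mverts ends (R + S)" using that unfolding mvT by blast
    then have "even (mdeg ends (R + S) u)" using evn by auto
    moreover have hl2: "ends l = {v, v}" using hl by simp
    have "mdeg ends (R + S) u = mdeg ends T0 u + (if u = v then 2 else 0)"
      unfolding T using dd_form[of ends l v v u, OF hl2] by (simp add: mdeg_add)
    ultimately show ?thesis by (auto split: if_splits)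
  qed
  ultimately have "eulerian_extension E ends R S0"
    unfolding eulerian_extension_def eulerian_def T0_def using SE S by auto
  moreover have "size S0 < size S" by (simp add: S)
  moreover have "mweight \<omega> S0 \<le> mweight \<omega> S" by (simp add: S mweight_def)
  ultimately show ?thesis by blast
qed

lemma edge_shape:
  assumes "multigraph V E ends" "e \<in> E" "v \<in> ends e"
  shows "ends e = {v} \<or> (\<exists>x. x \<noteq> v \<and> ends e = {v, x})"
proof (cases "ends e = {v}")
  case False
  then obtain x where x: "x \<in> ends e" "x \<noteq> v" using assms(3) by blast
  have fin: "finite (ends e)" and c: "card (ends e) \<le> 2"
    using assms(1,2) finite_subset unfolding multigraph_def by auto
  have sub: "{v, x} \<subseteq> ends e" using x assms(3) by auto
  have "card {v, x} = 2" using x by simp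
  then have "{v, x} = ends e" using card_subset_eq[OF fin sub] c card_mono[OF fin sub] by simp
  then show ?thesis using x by blast
qed simp

lemma wf_of_E:
  assumes "multigraph V E ends" "set_mset X \<subseteq> E"
  shows "wf_edges ends X"
  unfolding wf_edges_def
proof
  fix e assume e: "e \<in># X"
  then obtain v where v: "v \<in> ends e" using assms unfolding multigraph_def by blast
  have "ends e = {v} \<or> (\<exists>x. x \<noteq> v \<and> ends e = {v, x})" using edge_shape[OF assms(1) _ v] e assms(2) by auto
  then show "\<exists>a b. ends e = {a, b}" by (metis insert_absorb2)
qed


theorem mainTheorem7:
  fixes V :: "'v set" and E :: "'e set" and ends :: "'e \<Rightarrow> 'v set"
    and R S :: "'e multiset" and \<omega> :: "'e \<Rightarrow> nat"
  assumes "metric_instance V E ends R \<omega>"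
    and "edge_minimizing E ends R \<omega> S"
    and "v \<in> V"
  shows "size (filter_mset (\<lambda>e. v \<in> ends e) S) \<le> 2"
proof (rule ccontr)
  assume nle: "\<not> size (filter_mset (\<lambda>e. v \<in> ends e) S) \<le> 2"
  define F where "F = filter_mset (\<lambda>e. v \<in> ends e) S"
  have rpp: "rpp_instance V E ends R \<omega>" using assms(1) unfolding metric_instance_def by blast
  have mg: "multigraph V E ends" using rpp unfolding rpp_instance_def by blast
  have ext: "eulerian_extension E ends R S"
    and nob: "\<not> (\<exists>S'. eulerian_extension E ends R S' \<and> size S' < size S \<and> mweight \<omega> S' \<le> mweight \<omega> S)"
    using assms(2) unfolding edge_minimizing_def by blast+
  have SE: "set_mset S \<subseteq> E" and eul: "eulerian ends (R + S)"
    using ext unfolding eulerian_extension_def by auto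
  have sF: "size F = Suc (Suc (Suc (size F - 3)))" using nle unfolding F_def by simp
  obtain a F1 where F1: "F = add_mset a F1" using size_eq_Suc_imp_eq_union[OF sF] by blast
  have sF1: "size F1 = Suc (Suc (size F - 3))" using sF F1 by simp
  obtain b F2 where F2: "F1 = add_mset b F2" using size_eq_Suc_imp_eq_union[OF sF1] by blast
  have sF2: "size F2 = Suc (size F - 3)" using sF1 F2 by simp
  obtain c F0 where F0: "F2 = add_mset c F0" using size_eq_Suc_imp_eq_union[OF sF2] by blast
  define S0 where "S0 = F0 + filter_mset (\<lambda>e. v \<notin> ends e) S"
  have S: "S = add_mset a (add_mset b (add_mset c S0))"
    using multiset_partition[of S "\<lambda>e. v \<in> ends e"] F1 F2 F0 unfolding F_def S0_def by simp
  have inF: "a \<in># F" "b \<in># F" "c \<in># F" using F1 F2 F0 by auto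
  then have va: "v \<in> ends a" "v \<in> ends b" "v \<in> ends c" unfolding F_def by auto
  have aE: "a \<in> E" "b \<in> E" "c \<in> E" using S SE by auto
  have nl: "ends e \<noteq> {v}" if "e \<in> {a, b, c}" for e
  proof
    assume l: "ends e = {v}"
    have "\<exists>S1. S = add_mset e S1" using that S by auto
    then obtain S1 where "S = add_mset e S1" by blast
    from loop_reduce[OF rpp ext this l] nob show False by blast
  qed
  obtain x1 where h1: "ends a = {v, x1}" using edge_shape[OF mg aE(1) va(1)] nl[of a] by auto
  obtain x2 where h2: "ends b = {v, x2}" using edge_shape[OF mg aE(2) va(2)] nl[of b] by auto
  obtain x3 where h3: "ends c = {v, x3}" using edge_shape[OF mg aE(3) va(3)] nl[of c] by auto
  have RS: "R + S = add_mset a (add_mset b (add_mset c (R + S0)))" by (simp add: S)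
  have RSE: "set_mset (R + S) \<subseteq> E" using SE rpp unfolding rpp_instance_def by auto
  have wf: "wf_edges ends (R + S)" by (rule wf_of_E[OF mg RSE])
  have evn: "\<forall>u\<in>mverts ends (R + S). even (mdeg ends (R + S) u)"
    using eul unfolding eulerian_def by auto
  define r where "r p q \<longleftrightarrow> (p, q) \<in> (madj ends (R + S0))\<^sup>*" for p q
  have sym: "r p q \<longleftrightarrow> r q p" for p q unfolding r_def by (meson madj_rtrancl_sym)
  have P1: "\<not> r x1 v \<Longrightarrow> even ((if r x1 x1 then 1 else 0) + (if r x1 x2 then 1 else 0) + (if r x1 x3 then 1 else 0) :: nat)"
    unfolding r_def by (rule three_parity[OF RS h1 h2 h3 wf evn])
  have P2: "\<not> r x2 v \<Longrightarrow> even ((if r x2 x1 then 1 else 0) + (if r x2 x2 then 1 else 0) + (if r x2 x3 then 1 else 0) :: nat)"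
    unfolding r_def by (rule three_parity[OF RS h1 h2 h3 wf evn])
  have P3: "\<not> r x3 v \<Longrightarrow> even ((if r x3 x1 then 1 else 0) + (if r x3 x2 then 1 else 0) + (if r x3 x3 then 1 else 0) :: nat)"
    unfolding r_def by (rule three_parity[OF RS h1 h2 h3 wf evn])
  have refl: "r p p" for p unfolding r_def by simp
  have "r x1 v \<or> r x2 v \<or> r x3 v"
  proof (rule ccontr)
    assume "\<not> (r x1 v \<or> r x2 v \<or> r x3 v)"
    then have e1: "even ((1::nat) + (if r x1 x2 then 1 else 0) + (if r x1 x3 then 1 else 0))"
      and e2: "even ((if r x1 x2 then 1 else 0) + (1::nat) + (if r x2 x3 then 1 else 0))"
      and e3: "even ((if r x1 x3 then 1 else 0) + (if r x2 x3 then 1 else 0) + (1::nat))"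
      using P1 P2 P3 refl sym[of x2 x1] sym[of x3 x1] sym[of x3 x2] by auto
    then show False by (auto split: if_splits)
  qed
  moreover have "\<not> r x1 v"
  proof
    assume "r x1 v"
    then show False using reduce[OF assms(1) ext S h1 h2 h3] nob unfolding r_def by blast
  qed
  moreover have "\<not> r x2 v"
  proof
    assume "r x2 v"
    have S': "S = add_mset b (add_mset a (add_mset c S0))" using S by simp
    show False using reduce[OF assms(1) ext S' h2 h1 h3] nob \<open>r x2 v\<close> unfolding r_def by blast
  qed
  moreover have "\<not> r x3 v"
  proof
    assume "r x3 v"
    have S': "S = add_mset c (add_mset a (add_mset b S0))" using S by (simp add: add_mset_commute)
    show False using reduce[OF assms(1) ext S' h3 h1 h2] nob \<open>r x3 v\<close> unfolding r_def by blast
  qed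
  ultimately show False by blast
qed

end
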